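(* Let $\mu$ be a log-concave probability measure on $\mathbb{R}$ with density $f$, and let $M=\|f\|_\infty$. Then $$\Gamma(\mu)=2M.$$
   Context: A probability measure on $\mathbb{R}$ is log-concave if it has a density $f$ with $\ln f$ concave. For an interval $I=[a,b]$, $\mu^+(\partial I)=\liminf_{\epsilon\to0^+}\frac{\mu([a-\epsilon,b+\epsilon])-\mu([a,b])}{\epsilon}$, and $\Gamma(\mu)=\sup\{\mu^+(\partial I): I=[a,b]\subset\mathbb{R},\ a<b\}$. *)

theory Defs
  imports "HOL-Probability.Probability"
begin

(* ln f concave, with the convention ln 0 = -infinity: the support {f > 0}
   is convex and ln o f is concave on it. *)
definition log_concave_fun :: "(real \<Rightarrow> real) \<Rightarrow> bool" where
  "log_concave_fun f \<longleftrightarrow> (\<forall>x. f x \<ge> 0) \<and> convex {x. f x > 0} \<and>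
      concave_on {x. f x > 0} (\<lambda>x. ln (f x))"

definition log_concave_prob_with_density :: "real measure \<Rightarrow> (real \<Rightarrow> real) \<Rightarrow> bool" where
  "log_concave_prob_with_density \<mu> f \<longleftrightarrow>
     prob_space \<mu> \<and> f \<in> borel_measurable borel \<and> log_concave_fun f \<and>
     \<mu> = density lborel (\<lambda>x. ennreal (f x))"

definition boundary_measure :: "real measure \<Rightarrow> real \<Rightarrow> real \<Rightarrow> ereal" where
  "boundary_measure \<mu> a b =
     Liminf (at_right 0) (\<lambda>\<epsilon>. ereal ((measure \<mu> {a-\<epsilon>..b+\<epsilon>} - measure \<mu> {a..b}) / \<epsilon>))"

definition Gamma_measure :: "real measure \<Rightarrow> ereal" where
  "Gamma_measure \<mu> = (SUP ab \<in> {(a,b). a < b}. boundary_measure \<mu> (fst ab) (snd ab))"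

end

theory Submission
  imports Defs
begin

lemma lc_upper_meas:
  fixes f :: "real \<Rightarrow> real"
  assumes fm: "f \<in> borel_measurable borel" and mu: "\<mu> = density lborel (\<lambda>x. ennreal (f x))"
    and fin: "finite_measure \<mu>"
    and AE: "AE x in lborel. f x \<le> M" and M0: "0 \<le> M"
    and A: "A \<in> sets borel" and Afin: "emeasure lborel A < \<infinity>"
  shows "measure \<mu> A \<le> M * measure lborel A"
proof -
  have "emeasure \<mu> A = (\<integral>\<^sup>+ x. ennreal (f x) * indicator A x \<partial>lborel)"
    unfolding mu using fm A by (subst emeasure_density) auto
  also have "\<dots> \<le> (\<integral>\<^sup>+ x. ennreal M * indicator A x \<partial>lborel)"
    using AE by (intro nn_integral_mono_AE) (auto split: split_indicator intro: ennreal_leI elim!: eventually_mono)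
  also have "\<dots> = ennreal M * emeasure lborel A"
    using A by (subst nn_integral_cmult_indicator) auto
  finally have le: "emeasure \<mu> A \<le> ennreal M * emeasure lborel A" .
  have "measure \<mu> A = enn2real (emeasure \<mu> A)" by (simp add: measure_def)
  also have "\<dots> \<le> enn2real (ennreal M * emeasure lborel A)"
    using le Afin by (intro enn2real_mono) (auto simp: ennreal_mult_less_top)
  also have "\<dots> = M * measure lborel A"
    using M0 by (simp add: enn2real_mult measure_def)
  finally show ?thesis .
qed

lemma lc_lower_meas:
  fixes f :: "real \<Rightarrow> real"
  assumes fm: "f \<in> borel_measurable borel" and mu: "\<mu> = density lborel (\<lambda>x. ennreal (f x))"
    and fin: "finite_measure \<mu>"
    and lo: "\<And>x. x \<in> A \<Longrightarrow> c \<le> f x" and c0: "0 \<le> c"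
    and A: "A \<in> sets borel" and Afin: "emeasure lborel A < \<infinity>"
  shows "c * measure lborel A \<le> measure \<mu> A"
proof -
  have "ennreal c * emeasure lborel A = (\<integral>\<^sup>+ x. ennreal c * indicator A x \<partial>lborel)"
    using A by (subst nn_integral_cmult_indicator) auto
  also have "\<dots> \<le> (\<integral>\<^sup>+ x. ennreal (f x) * indicator A x \<partial>lborel)"
    using lo by (intro nn_integral_mono) (auto split: split_indicator intro: ennreal_leI)
  also have "\<dots> = emeasure \<mu> A"
    unfolding mu using fm A by (subst emeasure_density) auto
  finally have le: "ennreal c * emeasure lborel A \<le> emeasure \<mu> A" .
  have "c * measure lborel A = enn2real (ennreal c * emeasure lborel A)"
    using c0 by (simp add: enn2real_mult measure_def)
  also have "\<dots> \<le> enn2real (emeasure \<mu> A)"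
    using le finite_measure.emeasure_finite[OF fin, of A] by (intro enn2real_mono) (auto simp: less_top)
  also have "\<dots> = measure \<mu> A" by (simp add: measure_def)
  finally show ?thesis .
qed

lemma lc_decomp:
  fixes a b e :: real
  assumes fin: "finite_measure \<mu>" and sets: "sets \<mu> = sets borel" and ab: "a \<le> b" and e: "0 < e"
  shows "measure \<mu> {a-e..b+e} - measure \<mu> {a..b} = measure \<mu> {a-e..<a} + measure \<mu> {b<..b+e}"
proof -
  have eq: "{a-e..b+e} = ({a-e..<a} \<union> {a..b}) \<union> {b<..b+e}" using ab e by auto
  have "measure \<mu> {a-e..b+e} = measure \<mu> ({a-e..<a} \<union> {a..b}) + measure \<mu> {b<..b+e}"
    unfolding eq using sets ab by (intro finite_measure.finite_measure_Union[OF fin]) auto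
  also have "measure \<mu> ({a-e..<a} \<union> {a..b}) = measure \<mu> {a-e..<a} + measure \<mu> {a..b}"
    using sets by (intro finite_measure.finite_measure_Union[OF fin]) auto
  finally show ?thesis by simp
qed


lemma lc_superlevel_convex:
  fixes f :: "real \<Rightarrow> real"
  assumes lc: "log_concave_fun f" and c0: "0 < c"
  shows "convex {x. c < f x}"
proof (rule convexI)
  fix x y :: real and u v :: real
  assume x: "x \<in> {x. c < f x}" and y: "y \<in> {x. c < f x}" and u: "0 \<le> u" and v: "0 \<le> v" and uv: "u + v = 1"
  have cv: "convex {x. f x > 0}" and cc: "concave_on {x. f x > 0} (\<lambda>x. ln (f x))"
    using lc by (auto simp: log_concave_fun_def)
  have xP: "f x > 0" and yP: "f y > 0" using x y c0 by auto
  have eqv: "u = 1 - v" using uv by simp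
  have "(1 - v) * ln (f x) + v * ln (f y) \<le> ln (f ((1 - v) *\<^sub>R x + v *\<^sub>R y))"
    using concave_onD[OF cc, of v x y] v uv u xP yP by auto
  moreover have "ln c < (1 - v) * ln (f x) + v * ln (f y)"
  proof -
    have "ln c < ln (f x)" using x c0 by simp
    moreover have "ln c < ln (f y)" using y c0 by simp
    ultimately show ?thesis
    proof (cases "v = 0")
      case True then show ?thesis using \<open>ln c < ln (f x)\<close> by simp
    next
      case False
      then have "v * ln c < v * ln (f y)" using v \<open>ln c < ln (f y)\<close> by simp
      moreover have "(1 - v) * ln c \<le> (1 - v) * ln (f x)"
        using \<open>ln c < ln (f x)\<close> u uv by (intro mult_left_mono) auto
      ultimately show ?thesis by (simp add: algebra_simps)
    qed
  qed
  moreover have "f ((1 - v) *\<^sub>R x + v *\<^sub>R y) > 0"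
    using cv xP yP u v uv by (auto simp: convex_def eqv)
  ultimately have "ln c < ln (f ((1 - v) *\<^sub>R x + v *\<^sub>R y))" by linarith
  then have "c < f ((1 - v) *\<^sub>R x + v *\<^sub>R y)"
    using c0 \<open>f ((1 - v) *\<^sub>R x + v *\<^sub>R y) > 0\<close> by simp
  then show "u *\<^sub>R x + v *\<^sub>R y \<in> {x. c < f x}" by (simp add: eqv)
qed

theorem proposition5p8:
  fixes \<mu> :: "real measure" and f :: "real \<Rightarrow> real"
  assumes "log_concave_prob_with_density \<mu> f"
  shows "Gamma_measure \<mu> = 2 * esssup lborel (\<lambda>x. ereal (f x))"
proof -
  have ps: "prob_space \<mu>" and fm: "f \<in> borel_measurable borel" and lc: "log_concave_fun f"
    and mu: "\<mu> = density lborel (\<lambda>x. ennreal (f x))"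
    using assms by (auto simp: log_concave_prob_with_density_def)
  have fin: "finite_measure \<mu>" using ps by (simp add: prob_space_def)
  have sets: "sets \<mu> = sets borel" using mu by simp
  have f0: "\<And>x. 0 \<le> f x" using lc by (simp add: log_concave_fun_def)
  define E where "E = esssup lborel (\<lambda>x. ereal (f x))"
  have fme: "(\<lambda>x. ereal (f x)) \<in> borel_measurable lborel" using fm by simp
  have E0: "0 \<le> E"
  proof -
    have "esssup lborel (\<lambda>x::real. 0::ereal) = 0" by (rule esssup_const) simp
    moreover have "esssup lborel (\<lambda>x::real. 0::ereal) \<le> E"
      unfolding E_def using esssup_mono[of "\<lambda>x::real. 0::ereal" lborel "\<lambda>x. ereal (f x)"] f0 by simp
    ultimately show ?thesis by simp
  qed
  have quot_nonneg: "0 \<le> (measure \<mu> {a-e..b+e} - measure \<mu> {a..b}) / e" if "a \<le> b" "0 < e" for a b e :: real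
    using lc_decomp[OF fin sets that] that by (simp add: measure_nonneg)
  have bm_nonneg: "0 \<le> boundary_measure \<mu> a b" if "a \<le> b" for a b
    unfolding boundary_measure_def
    by (rule Liminf_bounded, rule eventually_mono[OF eventually_at_right_real[OF zero_less_one]]) (simp add: quot_nonneg[OF that])
  have bm_le: "boundary_measure \<mu> a b \<le> Gamma_measure \<mu>" if "a < b" for a b
    unfolding Gamma_measure_def using that by (intro SUP_upper2[of "(a,b)"]) auto
  have upper: "Gamma_measure \<mu> \<le> 2 * E"
  proof (cases E)
    case PInf then show ?thesis by simp
  next
    case MInf then show ?thesis using E0 by simp
  next
    case (real M)
    have M0: "0 \<le> M" using E0 real by simp
    have AE: "AE x in lborel. f x \<le> M"
      using esssup_AE[of "\<lambda>x. ereal (f x)" lborel] unfolding E_def[symmetric] real by simp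
    show ?thesis unfolding Gamma_measure_def
    proof (rule SUP_least)
      fix ab :: "real \<times> real" assume "ab \<in> {(a,b). a < b}"
      then obtain a b where ab: "ab = (a,b)" "a < b" by auto
      have "\<forall>e>0. (measure \<mu> {a-e..b+e} - measure \<mu> {a..b}) / e \<le> 2 * M"
      proof (intro allI impI)
        fix e :: real assume e: "0 < e"
        have m1: "measure \<mu> {a-e..<a} \<le> M * e"
          using lc_upper_meas[OF fm mu fin AE M0, of "{a-e..<a}"] e by simp
        have m2: "measure \<mu> {b<..b+e} \<le> M * e"
          using lc_upper_meas[OF fm mu fin AE M0, of "{b<..b+e}"] e by simp
        show "(measure \<mu> {a-e..b+e} - measure \<mu> {a..b}) / e \<le> 2 * M"
          using lc_decomp[OF fin sets _ e, of a b] ab m1 m2 e by (simp add: divide_le_eq)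
      qed
      note q = this
      have "boundary_measure \<mu> a b \<le> ereal (2 * M)"
        unfolding boundary_measure_def
        by (rule order_trans[OF Liminf_le_Limsup], simp, rule Limsup_bounded,
            rule eventually_mono[OF eventually_at_right_real[OF zero_less_one]]) (simp add: q)
      then show "boundary_measure \<mu> (fst ab) (snd ab) \<le> 2 * E" using ab real by simp
    qed
  qed
  have Gam0: "0 \<le> Gamma_measure \<mu>"
    using bm_nonneg[of 0 1] bm_le[of 0 1] by simp
  have lower_c: "ereal (2 * c) \<le> Gamma_measure \<mu>" if c0: "0 < c" and cE: "ereal c < E" for c :: real
  proof -
    define S where "S = {x. c < f x}"
    have Sconv: "convex S" unfolding S_def by (rule lc_superlevel_convex[OF lc c0])
    have "emeasure lborel {x \<in> space lborel. ereal c < ereal (f x)} > 0"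
      using esssup_pos_measure[OF fme cE[unfolded E_def]] .
    then have Spos: "emeasure lborel S > 0" unfolding S_def by simp
    obtain x y where xy: "x \<in> S" "y \<in> S" "x < y"
    proof -
      have "\<exists>x\<in>S. \<exists>y\<in>S. x \<noteq> y"
      proof (rule ccontr)
        assume H: "\<not> ?thesis"
        show False
        proof (cases "S = {}")
          case True then show False using Spos by simp
        next
          case False
          then obtain z where z: "z \<in> S" by blast
          then have "S \<subseteq> {z}" using H by blast
          then have "emeasure lborel S \<le> emeasure lborel {z}"
            by (intro emeasure_mono) auto
          then show False using Spos by simp
        qed
      qed
      then obtain x y where "x \<in> S" "y \<in> S" "x \<noteq> y" by blast
      then show ?thesis
      proof (cases "x < y")
        case True then show ?thesis using that[of x y] \<open>x \<in> S\<close> \<open>y \<in> S\<close> by blast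
      next
        case False then have "y < x" using \<open>x \<noteq> y\<close> by linarith
        then show ?thesis using that[of y x] \<open>x \<in> S\<close> \<open>y \<in> S\<close> by blast
      qed
    qed
    have seg: "{x..y} \<subseteq> S"
      using convex_contains_segment[of S] Sconv xy closed_segment_eq_real_ivl[of x y] by auto
    define a b d where "a = x + (y-x)/3" and "b = y - (y-x)/3" and "d = (y-x)/3"
    have ab: "a < b" unfolding a_def b_def using xy(3) by (simp add: field_simps)
    have d0: "0 < d" unfolding d_def using xy(3) by (simp add: field_simps)
    have ev: "2 * c \<le> (measure \<mu> {a-e..b+e} - measure \<mu> {a..b}) / e" if e0: "0 < e" and ed: "e < d" for e
    proof -
      have e: "0 < e \<and> e < d" using e0 ed by simp
      have i1: "x < a - e" and i2: "a < y" and i3: "x < b" and i4: "b + e < y"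
        using e xy(3) unfolding a_def b_def d_def by (simp_all add: field_simps)
      have s1: "{a-e..<a} \<subseteq> S"
      proof
        fix z assume "z \<in> {a-e..<a}"
        then have "z \<in> {x..y}" using i1 i2 by auto
        then show "z \<in> S" using seg by blast
      qed
      have s2: "{b<..b+e} \<subseteq> S"
      proof
        fix z assume "z \<in> {b<..b+e}"
        then have "z \<in> {x..y}" using i3 i4 by auto
        then show "z \<in> S" using seg by blast
      qed
      have m1: "c * e \<le> measure \<mu> {a-e..<a}"
      proof -
        have "\<And>z. z \<in> {a-e..<a} \<Longrightarrow> c \<le> f z" using s1 unfolding S_def by (auto intro: less_imp_le)
        from lc_lower_meas[where A="{a-e..<a}", OF fm mu fin this less_imp_le[OF c0]] e show ?thesis by simp
      qed
      have m2: "c * e \<le> measure \<mu> {b<..b+e}"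
      proof -
        have "\<And>z. z \<in> {b<..b+e} \<Longrightarrow> c \<le> f z" using s2 unfolding S_def by (auto intro: less_imp_le)
        from lc_lower_meas[where A="{b<..b+e}", OF fm mu fin this less_imp_le[OF c0]] e show ?thesis by simp
      qed
      show "2 * c \<le> (measure \<mu> {a-e..b+e} - measure \<mu> {a..b}) / e"
        using lc_decomp[OF fin sets _ conjunct1[OF e], of a b] ab m1 m2 e by (simp add: le_divide_eq)
    qed
    have "ereal (2 * c) \<le> boundary_measure \<mu> a b"
      unfolding boundary_measure_def
      by (rule Liminf_bounded, rule eventually_mono[OF eventually_at_right_real[OF d0]]) (simp add: ev)
    then show ?thesis using bm_le[OF ab] by simp
  qed
  have lower: "2 * E \<le> Gamma_measure \<mu>"
  proof (rule ccontr)
    assume "\<not> 2 * E \<le> Gamma_measure \<mu>"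
    then have lt: "Gamma_measure \<mu> < 2 * E" by simp
    then obtain g where g: "Gamma_measure \<mu> = ereal g" using Gam0
      by (cases "Gamma_measure \<mu>") auto
    have g0: "0 \<le> g" using Gam0 g by simp
    have "ereal (g/2) < E" using lt g by (cases E) auto
    then obtain c where c: "ereal (g/2) < ereal c" "ereal c < E"
      using ereal_dense2 by blast
    have "0 < c" using c(1) g0 by simp
    from lower_c[OF this c(2)] g c(1) show False by simp
  qed
  show ?thesis using upper lower unfolding E_def by (rule antisym)
qed

end
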